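(* Assume $A_{11}=0$. Then the local truncation error of the ROE scheme $$\frac{f^i_{j,n+1}-f^i_{j,n}}{\Delta t}+\frac{\lambda_i}{2\Delta x}(f^i_{j+1,n}-f^i_{j-1,n})-\frac{|\lambda_i|}{2\Delta x}(f^i_{j+1,n}-2f^i_{j,n}+f^i_{j-1,n})$$ $$=\frac{M_i(u_{j-1,n})+2M_i(u_{j,n})+M_i(u_{j+1,n})}{4}+\frac{\mathrm{sgn}(\lambda_i)}{4}\big(M_i(u_{j-1,n})-M_i(u_{j+1,n})\big)-\frac{f^i_{j-1,n}+2f^i_{j,n}+f^i_{j+1,n}}{4}-\frac{\mathrm{sgn}(\lambda_i)}{4}\big(f^i_{j-1,n}-f^i_{j+1,n}\big),$$ $i=1,\dots,m$, with fixed ratio $\rho=\Delta t/\Delta x$, satisfies, as $t\to+\infty$, $\mathcal{T}_u=O(\Delta x\,t^{-2})+O(\Delta x^2t^{-3/2})$ and $\mathcal{T}_{\tilde Z}=O(\Delta x\,t^{-2})+O(\Delta x^2t^{-3/2})$.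
   Context: Same setting as Theorem 3.1: BGK system $\partial_tf^i+\lambda_i\partial_xf^i=M_i(u)-f^i$ with $u=\sum_if^i$, Condition ED, the matrix $D$ with $D_{11}=I_k$, $D_{12}=(I_k\cdots I_k)$ transforming to $Z=Df=(u,\tilde Z)$ solving $\partial_tZ+A\partial_xZ=-Z+DM(u)$ with $A=D\Lambda D^{-1}$ symmetric; $A_{11}$ is the top-left $k\times k$ block of $A$ (which equals $\sum_i\lambda_ih_i^{-1}$ where $D^TD=\mathrm{diag}(h_1,\dots,h_m)$). The truncation error is the residual of the scheme on the exact smooth solution, transformed by $D$: $(\mathcal{T}_u,\mathcal{T}_{\tilde Z})=D(\mathcal{T}^1,\dots,\mathcal{T}^m)$. The exact solution is the global smooth solution from small smooth initial data and satisfies the decay estimates $\|\partial_x^\beta Z\|_{L^\infty}\lesssim t^{-1/2-\beta/2}$, $\|\partial_x^\beta\tilde Z\|_{L^\infty}\lesssim t^{-1-\beta/2}$, $\|\partial_x^\beta Z_t\|_{L^\infty}\lesssim t^{-1-\beta/2}$, $\|\partial_x^\beta\tilde Z_t\|_{L^\infty}\lesssim t^{-3/2-\beta/2}$, and, when $A_{11}=0$, $\|u_{tt}\|,\|u_{tx}\|,\|\tilde Z_t\|,\|\tilde Z_{tt}\|\lesssim t^{-2}$. *)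

theory Defs
  imports "HOL-Analysis.Analysis"
begin

text \<open>Partial derivatives of a function g(t,x) of time t and space x.\<close>

definition pdx :: "(real \<Rightarrow> real \<Rightarrow> 'a::real_normed_vector) \<Rightarrow> real \<Rightarrow> real \<Rightarrow> 'a" where
  "pdx g t x = vector_derivative (\<lambda>y. g t y) (at x)"

definition pdt :: "(real \<Rightarrow> real \<Rightarrow> 'a::real_normed_vector) \<Rightarrow> real \<Rightarrow> real \<Rightarrow> 'a" where
  "pdt g t x = vector_derivative (\<lambda>s. g s x) (at t)"

text \<open>Iterated partial derivative along a word: True = d/dt, False = d/dx
  (the head of the list is applied last).\<close>

fun pDw :: "bool list \<Rightarrow> (real \<Rightarrow> real \<Rightarrow> 'a::real_normed_vector) \<Rightarrow> real \<Rightarrow> real \<Rightarrow> 'a" where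
  "pDw [] g = g"
| "pDw (b # w) g = (if b then pdt (pDw w g) else pdx (pDw w g))"

text \<open>The mixed partial derivative d_t^p d_x^q g.\<close>

definition pD :: "nat \<Rightarrow> nat \<Rightarrow> (real \<Rightarrow> real \<Rightarrow> 'a::real_normed_vector) \<Rightarrow> real \<Rightarrow> real \<Rightarrow> 'a" where
  "pD p q g = (pdt ^^ p) ((pdx ^^ q) g)"

text \<open>Smoothness (C-infinity) on the half plane t > 0: all iterated partial derivatives
  exist and are jointly continuous.\<close>

definition smooth_tx :: "(real \<Rightarrow> real \<Rightarrow> 'a::real_normed_vector) \<Rightarrow> bool" where
  "smooth_tx g \<longleftrightarrow>
     (\<forall>w. continuous_on ({0<..} \<times> UNIV) (\<lambda>(t, x). pDw w g t x)
        \<and> (\<forall>t>0. \<forall>x. (\<lambda>y. pDw w g t y) differentiable (at x)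
                     \<and> (\<lambda>s. pDw w g s x) differentiable (at t)))"

text \<open>Local truncation error of the ROE scheme (component i), evaluated on the function
  f = (f^1,...,f^m), with u = sum_i f^i, space step dx, time step dt, at the point (t,x).\<close>

definition roe_trunc ::
  "(nat \<Rightarrow> real) \<Rightarrow> (nat \<Rightarrow> real^'k \<Rightarrow> real^'k) \<Rightarrow> nat \<Rightarrow> (nat \<Rightarrow> real \<Rightarrow> real \<Rightarrow> real^'k)
    \<Rightarrow> real \<Rightarrow> real \<Rightarrow> nat \<Rightarrow> real \<Rightarrow> real \<Rightarrow> real^'k" where
  "roe_trunc lam M m f dx dt i t x =
    (let u = (\<lambda>s y. \<Sum>l<m. f l s y);
         fm = f i t (x - dx); f0 = f i t x; fp = f i t (x + dx);
         Mm = M i (u t (x - dx)); M0 = M i (u t x); Mp = M i (u t (x + dx))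
     in (1 / dt) *\<^sub>R (f i (t + dt) x - f0)
        + (lam i / (2 * dx)) *\<^sub>R (fp - fm)
        - (\<bar>lam i\<bar> / (2 * dx)) *\<^sub>R (fp - 2 *\<^sub>R f0 + fm)
        - ( (1/4) *\<^sub>R (Mm + 2 *\<^sub>R M0 + Mp)
          + (sgn (lam i) / 4) *\<^sub>R (Mm - Mp)
          - (1/4) *\<^sub>R (fm + 2 *\<^sub>R f0 + fp)
          - (sgn (lam i) / 4) *\<^sub>R (fm - fp)))"

end

theory Submission
  imports Defs
begin

lemma mvt1:
  fixes \<phi> \<phi>' :: "real \<Rightarrow> 'a::real_normed_vector"
  assumes ab: "a \<le> b"
    and d: "\<And>y. y \<in> {a..b} \<Longrightarrow> (\<phi> has_vector_derivative \<phi>' y) (at y)"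
    and B: "\<And>y. y \<in> {a..b} \<Longrightarrow> norm (\<phi>' y) \<le> B"
  shows "norm (\<phi> b - \<phi> a) \<le> B * (b - a)"
proof -
  have "norm (\<phi> b - \<phi> a) \<le> B * norm (b - a)"
  proof (rule differentiable_bound[where S="{a..b}" and f'="\<lambda>y h. h *\<^sub>R \<phi>' y"])
    show "convex {a..b}" by simp
    fix y assume y: "y \<in> {a..b}"
    show "(\<phi> has_derivative (\<lambda>h. h *\<^sub>R \<phi>' y)) (at y within {a..b})"
      using d[OF y] unfolding has_vector_derivative_def by (rule has_derivative_at_withinI)
    have "onorm (\<lambda>h. h *\<^sub>R \<phi>' y) = onorm (\<lambda>h::real. h) * norm (\<phi>' y)"
      using onorm_scaleR_left[of "\<lambda>h::real. h" "\<phi>' y"] by simp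
    also have "\<dots> = norm (\<phi>' y)" by (simp add: onorm_id)
    finally show "onorm (\<lambda>h. h *\<^sub>R \<phi>' y) \<le> B" using B[OF y] by simp
  qed (use ab in auto)
  then show ?thesis using ab by simp
qed

lemma taylor2:
  fixes \<phi> \<phi>' \<phi>'' :: "real \<Rightarrow> 'a::real_normed_vector"
  assumes ab: "a \<le> b"
    and d1: "\<And>y. y \<in> {a..b} \<Longrightarrow> (\<phi> has_vector_derivative \<phi>' y) (at y)"
    and d2: "\<And>y. y \<in> {a..b} \<Longrightarrow> (\<phi>' has_vector_derivative \<phi>'' y) (at y)"
    and B: "\<And>y. y \<in> {a..b} \<Longrightarrow> norm (\<phi>'' y) \<le> B"
  shows "norm (\<phi> b - \<phi> a - (b - a) *\<^sub>R \<phi>' a) \<le> B * (b - a)^2"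
proof -
  have B0: "0 \<le> B" using B[of a] ab by (meson atLeastAtMost_iff norm_ge_zero order.trans order_refl)
  have g1: "norm (\<phi>' y - \<phi>' a) \<le> B * (b - a)" if y: "y \<in> {a..b}" for y
  proof -
    have "norm (\<phi>' y - \<phi>' a) \<le> B * (y - a)"
      by (rule mvt1[where \<phi>'="\<phi>''"]) (use y d2 B in auto)
    also have "\<dots> \<le> B * (b - a)" using y B0 by (intro mult_left_mono) auto
    finally show ?thesis .
  qed
  have "norm ((\<lambda>y. \<phi> y - \<phi> a - (y - a) *\<^sub>R \<phi>' a) b - (\<lambda>y. \<phi> y - \<phi> a - (y - a) *\<^sub>R \<phi>' a) a)
      \<le> (B * (b - a)) * (b - a)"
  proof (rule mvt1[where \<phi>'="\<lambda>y. \<phi>' y - \<phi>' a"])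
    fix y assume y: "y \<in> {a..b}"
    show "((\<lambda>y. \<phi> y - \<phi> a - (y - a) *\<^sub>R \<phi>' a) has_vector_derivative \<phi>' y - \<phi>' a) (at y)"
      by (rule has_vector_derivative_eq_rhs, (rule derivative_intros d1[OF y])+) simp
    show "norm (\<phi>' y - \<phi>' a) \<le> B * (b - a)" by (rule g1[OF y])
  qed (use ab in auto)
  then show ?thesis by (simp add: power2_eq_square mult.assoc)
qed

lemma deriv_quot_bound:
  fixes \<psi> :: "real \<Rightarrow> 'a::real_normed_vector"
  assumes d: "(\<psi> has_vector_derivative v) (at t)"
    and K: "\<And>h. 0 < h \<Longrightarrow> h < 1 \<Longrightarrow> norm (\<psi> (t + h) - \<psi> t) \<le> K * h"
  shows "norm v \<le> K"
proof (rule field_le_epsilon)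
  fix e :: real assume e: "0 < e"
  have "((\<lambda>h. norm (\<psi> (t + h) - \<psi> t - h *\<^sub>R v) / norm h) \<longlongrightarrow> 0) (at 0)"
    using d unfolding has_vector_derivative_def has_derivative_at by blast
  then have "eventually (\<lambda>h. norm (norm (\<psi> (t + h) - \<psi> t - h *\<^sub>R v) / norm h) < e) (at 0)"
    using e by (auto simp: tendsto_iff dist_norm)
  then obtain d where d0: "0 < d" and dd: "\<And>h. h \<noteq> 0 \<Longrightarrow> dist h 0 < d \<Longrightarrow>
      norm (norm (\<psi> (t + h) - \<psi> t - h *\<^sub>R v) / norm h) < e"
    unfolding eventually_at by blast
  define h where "h = min (d/2) (1/2)"
  have h0: "0 < h" "h < 1" "h < d" using d0 by (auto simp: h_def)
  have "norm (\<psi> (t + h) - \<psi> t - h *\<^sub>R v) / h < e"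
    using dd[of h] h0 by auto
  then have q: "norm (\<psi> (t + h) - \<psi> t - h *\<^sub>R v) \<le> e * h" using h0 by (simp add: divide_less_eq)
  have "h * norm v = norm (h *\<^sub>R v)" using h0 by simp
  also have "\<dots> \<le> norm (\<psi> (t + h) - \<psi> t) + norm (\<psi> (t + h) - \<psi> t - h *\<^sub>R v)"
    by (metis add.commute diff_diff_eq2 diff_add_cancel norm_triangle_ineq4 )
  also have "\<dots> \<le> K * h + e * h" using K[OF h0(1,2)] q by simp
  finally have "h * norm v \<le> h * (K + e)" by (simp add: algebra_simps)
  then show "norm v \<le> K + e" using h0 by simp
qed

lemma smooth_dx:
  assumes "smooth_tx g" "0 < t"
  shows "((\<lambda>y. pDw w g t y) has_vector_derivative pDw (False # w) g t y) (at y)"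
proof -
  have "(\<lambda>y. pDw w g t y) differentiable (at y)" using assms unfolding smooth_tx_def by blast
  then show ?thesis by (simp add: vector_derivative_works pdx_def)
qed

lemma smooth_dt:
  assumes "smooth_tx g" "0 < t"
  shows "((\<lambda>s. pDw w g s y) has_vector_derivative pDw (True # w) g t y) (at t)"
proof -
  have "(\<lambda>s. pDw w g s y) differentiable (at t)" using assms unfolding smooth_tx_def by blast
  then show ?thesis by (simp add: vector_derivative_works pdt_def)
qed

lemma pdx_pow: "(pdx ^^ q) g = pDw (replicate q False) g"
  by (induction q) auto

lemma pD_pDw: "pD p q g = pDw (replicate p True @ replicate q False) g"
  unfolding pD_def by (induction p) (auto simp: pdx_pow)

lemma bl_mv: "bounded_linear (\<lambda>x. (A::real^'n^'m) *v x)"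
  by (simp add: linear_conv_bounded_linear)

lemma pDw_lin:
  fixes g :: "'b \<Rightarrow> real \<Rightarrow> real \<Rightarrow> real^'n" and A :: "'b \<Rightarrow> real^'n^'m"
  assumes S: "finite S"
    and sm: "\<And>b. b \<in> S \<Longrightarrow> smooth_tx (g b)"
  shows "0 < t \<Longrightarrow> pDw w (\<lambda>s y. \<Sum>b\<in>S. A b *v g b s y) t x = (\<Sum>b\<in>S. A b *v pDw w (g b) t x)"
proof (induction w arbitrary: t x)
  case Nil
  then show ?case by simp
next
  case (Cons c w)
  have hv: "((\<lambda>z. \<Sum>b\<in>S. A b *v h b z) has_vector_derivative (\<Sum>b\<in>S. A b *v h' b)) (at z0)"
    if "\<And>b. b \<in> S \<Longrightarrow> (h b has_vector_derivative h' b) (at z0)" for h h' z0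
    by (rule has_vector_derivative_sum, rule bounded_linear.has_vector_derivative[OF bl_mv], rule that)
  show ?case
  proof (cases c)
    case True
    have "pdt (pDw w (\<lambda>s y. \<Sum>b\<in>S. A b *v g b s y)) t x
        = vector_derivative (\<lambda>s. \<Sum>b\<in>S. A b *v pDw w (g b) s x) (at t)"
      unfolding pdt_def
    proof (rule vector_derivative_cong_eq)
      show "\<forall>\<^sub>F s in nhds t. s \<in> UNIV \<longrightarrow> pDw w (\<lambda>s y. \<Sum>b\<in>S. A b *v g b s y) s x
              = (\<Sum>b\<in>S. A b *v pDw w (g b) s x)"
        using eventually_nhds_in_open[of "{0<..}" t] Cons.prems
        by (auto elim!: eventually_mono intro: Cons.IH)
    qed auto
    also have "\<dots> = (\<Sum>b\<in>S. A b *v pDw (True # w) (g b) t x)"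
      by (rule vector_derivative_at, rule hv, rule smooth_dt[OF sm Cons.prems])
    finally show ?thesis using True by simp
  next
    case False
    have "pdx (pDw w (\<lambda>s y. \<Sum>b\<in>S. A b *v g b s y)) t x
        = vector_derivative (\<lambda>y. \<Sum>b\<in>S. A b *v pDw w (g b) t y) (at x)"
      unfolding pdx_def
    proof -
      have "pDw w (\<lambda>s y. \<Sum>b\<in>S. A b *v g b s y) t = (\<lambda>y. \<Sum>b\<in>S. A b *v pDw w (g b) t y)"
        by (rule ext, rule Cons.IH[OF Cons.prems])
      then show "vector_derivative (\<lambda>y. pDw w (\<lambda>s y. \<Sum>b\<in>S. A b *v g b s y) t y) (at x)
        = vector_derivative (\<lambda>y. \<Sum>b\<in>S. A b *v pDw w (g b) t y) (at x)" by simp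
    qed
    also have "\<dots> = (\<Sum>b\<in>S. A b *v pDw (False # w) (g b) t x)"
      by (rule vector_derivative_at, rule hv, rule smooth_dx[OF sm Cons.prems])
    finally show ?thesis using False by simp
  qed
qed

lemma mvt1_abs:
  fixes \<phi> \<phi>' :: "real \<Rightarrow> 'a::real_normed_vector"
  assumes d: "\<And>y. (\<phi> has_vector_derivative \<phi>' y) (at y)"
    and B: "\<And>y. norm (\<phi>' y) \<le> B"
  shows "norm (\<phi> b - \<phi> a) \<le> B * \<bar>b - a\<bar>"
proof (cases "a \<le> b")
  case True
  then show ?thesis using mvt1[of a b \<phi> \<phi>' B] d B by auto
next
  case False
  then have "norm (\<phi> a - \<phi> b) \<le> B * (a - b)" using mvt1[of b a \<phi> \<phi>' B] d B by auto
  then show ?thesis using False by (simp add: norm_minus_commute)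
qed

lemma cross:
  assumes sm: "smooth_tx g" and t: "0 < t"
    and C: "\<And>s y. t \<le> s \<Longrightarrow> norm (pdt (pdx g) s y) \<le> C"
  shows "norm (pdt g t b - pdt g t a) \<le> C * \<bar>b - a\<bar>"
proof (rule deriv_quot_bound[where \<psi>="\<lambda>s. g s b - g s a"])
  show "((\<lambda>s. g s b - g s a) has_vector_derivative pdt g t b - pdt g t a) (at t)"
    using smooth_dt[OF sm t, of "[]" b] smooth_dt[OF sm t, of "[]" a]
    by (auto intro: has_vector_derivative_diff)
  fix h :: real assume h: "0 < h" "h < 1"
  have C0: "0 \<le> C" using C[of t 0] by (meson norm_ge_zero order.trans order_refl)
  have "norm ((g (t+h) b - g t b) - (g (t+h) a - g t a)) \<le> (C * h) * \<bar>b - a\<bar>"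
  proof (rule mvt1_abs[where \<phi>'="\<lambda>y. pdx g (t+h) y - pdx g t y"])
    fix y
    show "((\<lambda>y. g (t + h) y - g t y) has_vector_derivative pdx g (t + h) y - pdx g t y) (at y)"
      using smooth_dx[OF sm, of "t+h" "[]" y] smooth_dx[OF sm t, of "[]" y] h t
      by (auto intro: has_vector_derivative_diff)
    have "norm (pdx g (t + h) y - pdx g t y) \<le> C * (t + h - t)"
    proof (rule mvt1[where \<phi>="\<lambda>s. pdx g s y" and \<phi>'="\<lambda>s. pdt (pdx g) s y"])
      fix s assume s: "s \<in> {t..t+h}"
      show "((\<lambda>s. pdx g s y) has_vector_derivative pdt (pdx g) s y) (at s)"
        using smooth_dt[OF sm, of s "[False]" y] s t by auto
      show "norm (pdt (pdx g) s y) \<le> C" using C s by auto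
    qed (use h in auto)
    then show "norm (pdx g (t + h) y - pdx g t y) \<le> C * h" by simp
  qed
  then show "norm ((g (t + h) b - g (t + h) a) - (g t b - g t a)) \<le> C * \<bar>b - a\<bar> * h"
    by (simp add: algebra_simps)
qed

lemma shift_p:
  assumes "\<And>z. (F has_vector_derivative F' z) (at z)"
  shows "((\<lambda>y. F (x + y)) has_vector_derivative F' (x + y)) (at y)"
proof -
  have "((F \<circ> (\<lambda>y. x + y)) has_vector_derivative (1 *\<^sub>R F' (x + y))) (at y)"
    by (rule vector_diff_chain_at) (auto intro!: derivative_eq_intros assms)
  then show ?thesis by (simp add: o_def)
qed

lemma shift_m:
  assumes "\<And>z. (F has_vector_derivative F' z) (at z)"
  shows "((\<lambda>y. F (x - y)) has_vector_derivative - F' (x - y)) (at y)"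
proof -
  have "((F \<circ> (\<lambda>y. x - y)) has_vector_derivative ((-1) *\<^sub>R F' (x - y))) (at y)"
    by (rule vector_diff_chain_at) (auto intro!: derivative_eq_intros assms)
  then show ?thesis by (simp add: o_def)
qed

lemma norm6: "norm (a + b - c - d - e - f) \<le> norm a + norm b + norm c + norm d + norm e + norm (f::'a::real_normed_vector)"
proof -
  have "norm (a + b - c - d - e - f) \<le> norm (a + b - c - d - e) + norm f" by (rule norm_triangle_ineq4)
  also have "norm (a + b - c - d - e) \<le> norm (a + b - c - d) + norm e" by (rule norm_triangle_ineq4)
  also have "norm (a + b - c - d) \<le> norm (a + b - c) + norm d" by (rule norm_triangle_ineq4)
  also have "norm (a + b - c) \<le> norm (a + b) + norm c" by (rule norm_triangle_ineq4)
  also have "norm (a + b) \<le> norm a + norm b" by (rule norm_triangle_ineq)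
  finally show ?thesis by simp
qed

lemma roe_bound:
  fixes g :: "real \<Rightarrow> real \<Rightarrow> real^'k"
  assumes sm: "smooth_tx g" and t: "0 < t" and r: "0 < r" and dt: "0 < dt"
    and Btt: "\<And>s y. t \<le> s \<Longrightarrow> norm (pdt (pdt g) s y) \<le> B"
    and Btx: "\<And>s y. t \<le> s \<Longrightarrow> norm (pdt (pdx g) s y) \<le> B"
    and Bxxx: "\<And>y. norm (pdx (pdx (pdx g)) t y) \<le> B"
    and Qm: "Qm = pdt g t (x - r) + lam *\<^sub>R pdx g t (x - r) + g t (x - r)"
    and Qz: "Qz = pdt g t x + lam *\<^sub>R pdx g t x + g t x"
    and Qp: "Qp = pdt g t (x + r) + lam *\<^sub>R pdx g t (x + r) + g t (x + r)"
  shows "norm ((1 / dt) *\<^sub>R (g (t + dt) x - g t x)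
        + (lam / (2 * r)) *\<^sub>R (g t (x + r) - g t (x - r))
        - (\<bar>lam\<bar> / (2 * r)) *\<^sub>R (g t (x + r) - 2 *\<^sub>R g t x + g t (x - r))
        - ( (1/4) *\<^sub>R (Qm + 2 *\<^sub>R Qz + Qp)
          + (sgn lam / 4) *\<^sub>R (Qm - Qp)
          - (1/4) *\<^sub>R (g t (x - r) + 2 *\<^sub>R g t x + g t (x + r))
          - (sgn lam / 4) *\<^sub>R (g t (x - r) - g t (x + r))))
      \<le> B * (dt + r + 2 * \<bar>lam\<bar> * r^2)"
proof -
  define G1 where "G1 = pdx g t"
  define G2 where "G2 = pdx (pdx g) t"
  define G3 where "G3 = pdx (pdx (pdx g)) t"
  define Gt where "Gt = pdt g t"
  have two: "\<And>v::real^'k. 2 * v = 2 *\<^sub>R v" by (simp add: vec_eq_iff)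
  have dh: "\<And>y. ((\<lambda>y. y/2) has_field_derivative 1/2) (at y)"
    by (auto intro!: derivative_eq_intros)
  have B0: "0 \<le> B" using Bxxx[of 0] by (meson norm_ge_zero order.trans)
  have d0: "\<And>z. ((\<lambda>y. g t y) has_vector_derivative G1 z) (at z)"
    using smooth_dx[OF sm t, of "[]"] by (simp add: G1_def)
  have d1: "\<And>z. (G1 has_vector_derivative G2 z) (at z)"
    using smooth_dx[OF sm t, of "[False]"] by (simp add: G1_def G2_def)
  have d2: "\<And>z. (G2 has_vector_derivative G3 z) (at z)"
    using smooth_dx[OF sm t, of "[False,False]"] by (simp add: G2_def G3_def)
  have b3: "\<And>z. norm (G3 z) \<le> B" using Bxxx by (simp add: G3_def)
  \<comment> \<open>time Taylor\<close>
  have E0: "norm (g (t + dt) x - g t x - dt *\<^sub>R Gt x) \<le> B * dt^2"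
  proof -
    have "norm ((\<lambda>s. g s x) (t + dt) - (\<lambda>s. g s x) t - (t + dt - t) *\<^sub>R pdt g t x) \<le> B * (t + dt - t)^2"
    proof (rule taylor2[where \<phi>'="\<lambda>s. pdt g s x" and \<phi>''="\<lambda>s. pdt (pdt g) s x"])
      fix s assume s: "s \<in> {t..t+dt}"
      then have s0: "0 < s" using t by auto
      show "((\<lambda>s. g s x) has_vector_derivative pdt g s x) (at s)"
        using smooth_dt[OF sm s0, of "[]" x] by simp
      show "((\<lambda>s. pdt g s x) has_vector_derivative pdt (pdt g) s x) (at s)"
        using smooth_dt[OF sm s0, of "[True]" x] by simp
      show "norm (pdt (pdt g) s x) \<le> B" using Btt s by auto
    qed (use dt in auto)
    then show ?thesis by (simp add: Gt_def)
  qed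
  \<comment> \<open>psi bound\<close>
  have psi: "norm (G2 (x + y) - G2 (x - y)) \<le> 2 * B * r" if y: "y \<in> {0..r}" for y
  proof -
    have "norm ((\<lambda>z. G2 (x + z) - G2 (x - z)) y - (\<lambda>z. G2 (x + z) - G2 (x - z)) 0) \<le> (2 * B) * (y - 0)"
    proof (rule mvt1[where \<phi>'="\<lambda>z. G3 (x + z) + G3 (x - z)"])
      fix z
      show "((\<lambda>z. G2 (x + z) - G2 (x - z)) has_vector_derivative G3 (x + z) + G3 (x - z)) (at z)"
        by (rule has_vector_derivative_eq_rhs, rule has_vector_derivative_diff,
            rule shift_p[OF d2], rule shift_m[OF d2]) simp
      show "norm (G3 (x + z) + G3 (x - z)) \<le> 2 * B"
        using norm_triangle_ineq[of "G3 (x + z)" "G3 (x - z)"] b3[of "x+z"] b3[of "x-z"] by simp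
    qed (use y in auto)
    also have "\<dots> \<le> 2 * B * r" using y B0 by (intro mult_left_mono) auto
    finally show ?thesis by simp
  qed
  \<comment> \<open>E1\<close>
  have E1: "norm (g t (x + r) - g t (x - r) - (2 * r) *\<^sub>R G1 x) \<le> 2 * B * r^3"
  proof -
    have "norm ((\<lambda>y. g t (x + y) - g t (x - y) - (2 * y) *\<^sub>R G1 x) r
        - (\<lambda>y. g t (x + y) - g t (x - y) - (2 * y) *\<^sub>R G1 x) 0
        - (r - 0) *\<^sub>R (G1 (x + 0) + G1 (x - 0) - 2 *\<^sub>R G1 x)) \<le> (2 * B * r) * (r - 0)^2"
    proof (rule taylor2[where \<phi>'="\<lambda>y. G1 (x + y) + G1 (x - y) - 2 *\<^sub>R G1 x"
          and \<phi>''="\<lambda>y. G2 (x + y) - G2 (x - y)"])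
      fix y
      show "((\<lambda>y. g t (x + y) - g t (x - y) - (2 * y) *\<^sub>R G1 x) has_vector_derivative
          G1 (x + y) + G1 (x - y) - 2 *\<^sub>R G1 x) (at y)"
        by (rule has_vector_derivative_eq_rhs,
            (rule has_vector_derivative_diff has_vector_derivative_scaleR derivative_intros
                  shift_p[OF d0] shift_m[OF d0])+) simp
      show "((\<lambda>y. G1 (x + y) + G1 (x - y) - 2 *\<^sub>R G1 x) has_vector_derivative
          G2 (x + y) - G2 (x - y)) (at y)"
        by (rule has_vector_derivative_eq_rhs,
            (rule has_vector_derivative_diff has_vector_derivative_add derivative_intros
                  shift_p[OF d1] shift_m[OF d1])+) simp
    next
      fix y assume "y \<in> {0..r}"
      then show "norm (G2 (x + y) - G2 (x - y)) \<le> 2 * B * r" by (rule psi)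
    qed (use r in auto)
    then show ?thesis by (simp add: power2_eq_square power3_eq_cube mult.assoc two)
  qed
  \<comment> \<open>E2\<close>
  have E2: "norm (g t (x + r) - 2 *\<^sub>R g t x + g t (x - r) - (r / 2) *\<^sub>R (G1 (x + r) - G1 (x - r))) \<le> B * r^3"
  proof -
    have "norm ((\<lambda>y. g t (x + y) - 2 *\<^sub>R g t x + g t (x - y) - (y / 2) *\<^sub>R (G1 (x + y) - G1 (x - y))) r
        - (\<lambda>y. g t (x + y) - 2 *\<^sub>R g t x + g t (x - y) - (y / 2) *\<^sub>R (G1 (x + y) - G1 (x - y))) 0
        - (r - 0) *\<^sub>R ((1/2) *\<^sub>R (G1 (x + 0) - G1 (x - 0)) - (0 / 2) *\<^sub>R (G2 (x + 0) + G2 (x - 0))))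
        \<le> (B * r) * (r - 0)^2"
    proof (rule taylor2[where \<phi>'="\<lambda>y. (1/2) *\<^sub>R (G1 (x + y) - G1 (x - y)) - (y / 2) *\<^sub>R (G2 (x + y) + G2 (x - y))"
          and \<phi>''="\<lambda>y. - (y / 2) *\<^sub>R (G3 (x + y) - G3 (x - y))"])
      fix y
      show "((\<lambda>y. g t (x + y) - 2 *\<^sub>R g t x + g t (x - y) - (y / 2) *\<^sub>R (G1 (x + y) - G1 (x - y)))
          has_vector_derivative (1/2) *\<^sub>R (G1 (x + y) - G1 (x - y)) - (y / 2) *\<^sub>R (G2 (x + y) + G2 (x - y))) (at y)"
        by (rule has_vector_derivative_eq_rhs,
            (rule has_vector_derivative_diff has_vector_derivative_add has_vector_derivative_scaleR
                  dh derivative_intros shift_p[OF d0] shift_m[OF d0] shift_p[OF d1] shift_m[OF d1])+)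
           (simp add: algebra_simps)
      show "((\<lambda>y. (1/2) *\<^sub>R (G1 (x + y) - G1 (x - y)) - (y / 2) *\<^sub>R (G2 (x + y) + G2 (x - y)))
          has_vector_derivative - (y / 2) *\<^sub>R (G3 (x + y) - G3 (x - y))) (at y)"
        by (rule has_vector_derivative_eq_rhs,
            (rule has_vector_derivative_diff has_vector_derivative_add has_vector_derivative_scaleR
                  dh derivative_intros shift_p[OF d1] shift_m[OF d1] shift_p[OF d2] shift_m[OF d2])+)
           (simp add: algebra_simps)
    next
      fix y assume y: "y \<in> {0..r}"
      have "norm (G3 (x + y) - G3 (x - y)) \<le> 2 * B"
        using norm_triangle_ineq4[of "G3 (x + y)" "G3 (x - y)"] b3[of "x+y"] b3[of "x-y"] by simp
      then have "\<bar>y/2\<bar> * norm (G3 (x + y) - G3 (x - y)) \<le> (r/2) * (2 * B)"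
        using y by (intro mult_mono) auto
      then show "norm (- (y / 2) *\<^sub>R (G3 (x + y) - G3 (x - y))) \<le> B * r" by (simp add: mult.commute)
    qed (use r in auto)
    then show ?thesis by (simp add: power2_eq_square power3_eq_cube mult.assoc two algebra_simps)
  qed
  \<comment> \<open>E3\<close>
  have E3: "norm (G1 (x + r) + G1 (x - r) - 2 *\<^sub>R G1 x) \<le> 2 * B * r^2"
  proof -
    have "norm ((\<lambda>y. G1 (x + y) + G1 (x - y) - 2 *\<^sub>R G1 x) r - (\<lambda>y. G1 (x + y) + G1 (x - y) - 2 *\<^sub>R G1 x) 0
        - (r - 0) *\<^sub>R (G2 (x + 0) - G2 (x - 0))) \<le> (2 * B) * (r - 0)^2"
    proof (rule taylor2[where \<phi>'="\<lambda>y. G2 (x + y) - G2 (x - y)" and \<phi>''="\<lambda>y. G3 (x + y) + G3 (x - y)"])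
      fix y
      show "((\<lambda>y. G1 (x + y) + G1 (x - y) - 2 *\<^sub>R G1 x) has_vector_derivative
          G2 (x + y) - G2 (x - y)) (at y)"
        by (rule has_vector_derivative_eq_rhs,
            (rule has_vector_derivative_diff has_vector_derivative_add derivative_intros
                  shift_p[OF d1] shift_m[OF d1])+) simp
      show "((\<lambda>y. G2 (x + y) - G2 (x - y)) has_vector_derivative G3 (x + y) + G3 (x - y)) (at y)"
        by (rule has_vector_derivative_eq_rhs, rule has_vector_derivative_diff,
            rule shift_p[OF d2], rule shift_m[OF d2]) simp
      show "norm (G3 (x + y) + G3 (x - y)) \<le> 2 * B"
        using norm_triangle_ineq[of "G3 (x + y)" "G3 (x - y)"] b3[of "x+y"] b3[of "x-y"] by simp
    qed (use r in auto)
    then show ?thesis by (simp add: two)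
  qed
  \<comment> \<open>E4\<close>
  have E4p: "norm (Gt (x + r) - Gt x) \<le> B * r"
    using cross[OF sm t, of B "x + r" x] Btx r by (simp add: Gt_def)
  have E4m: "norm (Gt (x - r) - Gt x) \<le> B * r"
    using cross[OF sm t, of B "x - r" x] Btx r by (simp add: Gt_def)
  define D0 where "D0 = g (t + dt) x - g t x - dt *\<^sub>R Gt x"
  define D1 where "D1 = g t (x + r) - g t (x - r) - (2 * r) *\<^sub>R G1 x"
  define D2 where "D2 = g t (x + r) - 2 *\<^sub>R g t x + g t (x - r) - (r / 2) *\<^sub>R (G1 (x + r) - G1 (x - r))"
  define D3 where "D3 = G1 (x + r) + G1 (x - r) - 2 *\<^sub>R G1 x"
  define D4p where "D4p = Gt (x + r) - Gt x"
  define D4m where "D4m = Gt (x - r) - Gt x"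
  have sl: "sgn lam * lam = \<bar>lam\<bar>" by (simp add: sgn_real_def)
  have sa: "\<bar>1 + sgn lam\<bar> = 1 + sgn lam" "\<bar>1 - sgn lam\<bar> = 1 - sgn lam" by (simp_all add: sgn_real_def)
  have sg1: "-1 \<le> sgn lam" "sgn lam \<le> 1" by (simp_all add: sgn_real_def)
  have sgnb: "\<bar>sgn lam\<bar> \<le> 1" by (simp add: sgn_real_def)
  have ident: "(1 / dt) *\<^sub>R (g (t + dt) x - g t x)
        + (lam / (2 * r)) *\<^sub>R (g t (x + r) - g t (x - r))
        - (\<bar>lam\<bar> / (2 * r)) *\<^sub>R (g t (x + r) - 2 *\<^sub>R g t x + g t (x - r))
        - ( (1/4) *\<^sub>R (Qm + 2 *\<^sub>R Qz + Qp)
          + (sgn lam / 4) *\<^sub>R (Qm - Qp)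
          - (1/4) *\<^sub>R (g t (x - r) + 2 *\<^sub>R g t x + g t (x + r))
          - (sgn lam / 4) *\<^sub>R (g t (x - r) - g t (x + r)))
      = (1 / dt) *\<^sub>R D0 + (lam / (2 * r)) *\<^sub>R D1 - (\<bar>lam\<bar> / (2 * r)) *\<^sub>R D2 - (lam / 4) *\<^sub>R D3
        - ((1 + sgn lam) / 4) *\<^sub>R D4m - ((1 - sgn lam) / 4) *\<^sub>R D4p"
    unfolding D0_def D1_def D2_def D3_def D4p_def D4m_def Qm Qz Qp G1_def[symmetric] Gt_def[symmetric]
    using dt r
    by (simp add: vec_eq_iff field_simps sl[symmetric])
  have n0: "norm ((1 / dt) *\<^sub>R D0) \<le> B * dt"
    using E0 dt by (simp add: D0_def divide_le_eq power2_eq_square mult.commute mult.left_commute)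
  have n1: "norm ((lam / (2 * r)) *\<^sub>R D1) \<le> \<bar>lam\<bar> * B * r^2"
  proof -
    have "norm ((lam / (2 * r)) *\<^sub>R D1) = (\<bar>lam\<bar> / (2 * r)) * norm D1" using r by simp
    also have "\<dots> \<le> (\<bar>lam\<bar> / (2 * r)) * (2 * B * r^3)" using E1 r by (intro mult_left_mono) (auto simp: D1_def)
    also have "\<dots> = \<bar>lam\<bar> * B * r^2" using r by (simp add: power2_eq_square power3_eq_cube field_simps)
    finally show ?thesis .
  qed
  have n2: "norm ((\<bar>lam\<bar> / (2 * r)) *\<^sub>R D2) \<le> \<bar>lam\<bar> * B * r^2 / 2"
  proof -
    have "norm ((\<bar>lam\<bar> / (2 * r)) *\<^sub>R D2) = (\<bar>lam\<bar> / (2 * r)) * norm D2" using r by simp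
    also have "\<dots> \<le> (\<bar>lam\<bar> / (2 * r)) * (B * r^3)" using E2 r by (intro mult_left_mono) (auto simp: D2_def)
    also have "\<dots> = \<bar>lam\<bar> * B * r^2 / 2" using r by (simp add: power2_eq_square power3_eq_cube field_simps)
    finally show ?thesis .
  qed
  have n3: "norm ((lam / 4) *\<^sub>R D3) \<le> \<bar>lam\<bar> * B * r^2 / 2"
  proof -
    have "norm ((lam / 4) *\<^sub>R D3) = (\<bar>lam\<bar> / 4) * norm D3" by simp
    also have "\<dots> \<le> (\<bar>lam\<bar> / 4) * (2 * B * r^2)" using E3 by (intro mult_left_mono) (auto simp: D3_def)
    finally show ?thesis by (simp add: mult_ac)
  qed
  have n4: "norm (((1 + sgn lam) / 4) *\<^sub>R D4m) \<le> ((1 + sgn lam) / 4) * (B * r)"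
  proof -
    have "norm (((1 + sgn lam) / 4) *\<^sub>R D4m) = ((1 + sgn lam) / 4) * norm D4m"
      using sgnb by (simp add: sa)
    also have "\<dots> \<le> ((1 + sgn lam) / 4) * (B * r)" using E4m sg1 by (intro mult_left_mono) (auto simp: D4m_def)
    finally show ?thesis .
  qed
  have n5: "norm (((1 - sgn lam) / 4) *\<^sub>R D4p) \<le> ((1 - sgn lam) / 4) * (B * r)"
  proof -
    have "norm (((1 - sgn lam) / 4) *\<^sub>R D4p) = ((1 - sgn lam) / 4) * norm D4p"
      using sgnb by (simp add: sa)
    also have "\<dots> \<le> ((1 - sgn lam) / 4) * (B * r)" using E4p sg1 by (intro mult_left_mono) (auto simp: D4p_def)
    finally show ?thesis .
  qed
  have "B * r / 2 \<le> B * r" using B0 r by simp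
  then show ?thesis
    unfolding ident
    using norm6[of "(1 / dt) *\<^sub>R D0" "(lam / (2 * r)) *\<^sub>R D1" "(\<bar>lam\<bar> / (2 * r)) *\<^sub>R D2"
      "(lam / 4) *\<^sub>R D3" "((1 + sgn lam) / 4) *\<^sub>R D4m" "((1 - sgn lam) / 4) *\<^sub>R D4p"] n0 n1 n2 n3 n4 n5
    by (simp add: algebra_simps)
qed

lemma mv_sum_r: "(A::real^'n^'m) *v (\<Sum>i\<in>S. v i) = (\<Sum>i\<in>S. A *v v i)"
  by (induction S rule: infinite_finite_induct) (auto simp: matrix_vector_right_distrib)

lemma mv_sum_l: "(\<Sum>i\<in>S. (A i::real^'n^'m)) *v x = (\<Sum>i\<in>S. A i *v x)"
  by (induction S rule: infinite_finite_induct) (auto simp: matrix_vector_mult_add_rdistrib)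

lemma mm_sum_r: "(A::real^'n^'m) ** (\<Sum>i\<in>S. B i) = (\<Sum>i\<in>S. A ** (B i::real^'p^'n))"
  by (induction S rule: infinite_finite_induct) (auto simp: matrix_add_ldistrib)

lemma norm_mv: "norm ((A::real^'n^'m) *v x) \<le> onorm ((*v) A) * norm x"
  using onorm[OF bl_mv[of A]] by simp

lemma inv_left: "invertible (A::real^'n^'n) \<Longrightarrow> matrix_inv A ** A = mat 1"
  unfolding invertible_def matrix_inv_def by (rule someI2_ex) auto

theorem mainTheorem4:
  fixes m :: nat
    and lam :: "nat \<Rightarrow> real"
    and M :: "nat \<Rightarrow> real^'k \<Rightarrow> real^'k"
    and f :: "nat \<Rightarrow> real \<Rightarrow> real \<Rightarrow> real^'k"
    and D :: "nat \<Rightarrow> nat \<Rightarrow> real^'k^'k"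
    and h :: "nat \<Rightarrow> real^'k^'k"
    and \<rho> :: real
  assumes m_pos: "0 < m"
    and rho_pos: "0 < \<rho>"
    \<comment> \<open>structure of D: first block row (I_k ... I_k), D^T D = diag(h_1,...,h_m)\<close>
    and D_first_row: "\<forall>b<m. D 0 b = mat 1"
    and DtD: "\<forall>b<m. \<forall>c<m. (\<Sum>a<m. transpose (D a b) ** D a c) = (if b = c then h b else 0)"
    and h_inv: "\<forall>b<m. invertible (h b)"
    \<comment> \<open>A_11 = sum_i lambda_i h_i^{-1} = 0\<close>
    and A11_zero: "(\<Sum>b<m. lam b *\<^sub>R matrix_inv (h b)) = 0"
    \<comment> \<open>f is a smooth solution of the BGK system for t > 0\<close>
    and smooth: "\<forall>i<m. smooth_tx (f i)"
    and bgk: "\<forall>i<m. \<forall>t>0. \<forall>x. pdt (f i) t x + lam i *\<^sub>R pdx (f i) t x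
                 = M i (\<Sum>l<m. f l t x) - f i t x"
    \<comment> \<open>decay estimates for Z = D f = (u, Z~) (block 0 is u, blocks 1..m-1 are Z~)\<close>
    and decay_Z: "\<forall>a<m. \<forall>\<beta>. \<exists>C. \<forall>t\<ge>1. \<forall>x.
        norm (pD 0 \<beta> (\<lambda>s y. \<Sum>b<m. D a b *v f b s y) t x) \<le> C * t powr (-1/2 - real \<beta> / 2)"
    and decay_Zt: "\<forall>a. 1 \<le> a \<and> a < m \<longrightarrow> (\<forall>\<beta>. \<exists>C. \<forall>t\<ge>1. \<forall>x.
        norm (pD 0 \<beta> (\<lambda>s y. \<Sum>b<m. D a b *v f b s y) t x) \<le> C * t powr (-1 - real \<beta> / 2))"
    and decay_Z_t: "\<forall>a<m. \<forall>\<beta>. \<exists>C. \<forall>t\<ge>1. \<forall>x.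
        norm (pD 1 \<beta> (\<lambda>s y. \<Sum>b<m. D a b *v f b s y) t x) \<le> C * t powr (-1 - real \<beta> / 2)"
    and decay_Zt_t: "\<forall>a. 1 \<le> a \<and> a < m \<longrightarrow> (\<forall>\<beta>. \<exists>C. \<forall>t\<ge>1. \<forall>x.
        norm (pD 1 \<beta> (\<lambda>s y. \<Sum>b<m. D a b *v f b s y) t x) \<le> C * t powr (-3/2 - real \<beta> / 2))"
    \<comment> \<open>additional decay available when A_11 = 0\<close>
    and decay_u_tt: "\<exists>C. \<forall>t\<ge>1. \<forall>x. norm (pD 2 0 (\<lambda>s y. \<Sum>b<m. f b s y) t x) \<le> C * t powr (-2)"
    and decay_u_tx: "\<exists>C. \<forall>t\<ge>1. \<forall>x. norm (pD 1 1 (\<lambda>s y. \<Sum>b<m. f b s y) t x) \<le> C * t powr (-2)"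
    and decay_Zt_t2: "\<forall>a. 1 \<le> a \<and> a < m \<longrightarrow> (\<exists>C. \<forall>t\<ge>1. \<forall>x.
        norm (pD 1 0 (\<lambda>s y. \<Sum>b<m. D a b *v f b s y) t x) \<le> C * t powr (-2))"
    and decay_Zt_tt: "\<forall>a. 1 \<le> a \<and> a < m \<longrightarrow> (\<exists>C. \<forall>t\<ge>1. \<forall>x.
        norm (pD 2 0 (\<lambda>s y. \<Sum>b<m. D a b *v f b s y) t x) \<le> C * t powr (-2))"
  shows "\<exists>C T0 dx0. 0 < dx0 \<and> (\<forall>dx. 0 < dx \<and> dx \<le> dx0 \<longrightarrow>
           (\<forall>(n::nat) (j::int). real n * (\<rho> * dx) \<ge> T0 \<longrightarrow>
              (\<forall>a<m. norm (\<Sum>b<m. D a b *v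
                   roe_trunc lam M m f dx (\<rho> * dx) b (real n * (\<rho> * dx)) (real_of_int j * dx))
                 \<le> C * (dx * (real n * (\<rho> * dx)) powr (-2)
                        + dx\<^sup>2 * (real n * (\<rho> * dx)) powr (-3/2)))))"
proof -
  define Z where "Z a = (\<lambda>s y. \<Sum>b<m. D a b *v f b s y)" for a
  have smf: "\<And>b. b < m \<Longrightarrow> smooth_tx (f b)" using smooth by auto
  have Zlin: "\<And>a w t x. 0 < t \<Longrightarrow> pDw w (Z a) t x = (\<Sum>b<m. D a b *v pDw w (f b) t x)"
    unfolding Z_def by (rule pDw_lin) (auto simp: smf)
  define L where "L i a = matrix_inv (h i) ** transpose (D a i)" for i a
  have finv: "pDw w (f i) t x = (\<Sum>a<m. L i a *v pDw w (Z a) t x)" if i: "i < m" and t: "0 < t" for i w t x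
  proof -
    have "(\<Sum>a<m. L i a *v pDw w (Z a) t x) = (\<Sum>a<m. \<Sum>b<m. (L i a ** D a b) *v pDw w (f b) t x)"
      by (simp add: Zlin[OF t] mv_sum_r matrix_vector_mul_assoc)
    also have "\<dots> = (\<Sum>b<m. \<Sum>a<m. (L i a ** D a b) *v pDw w (f b) t x)" by (rule sum.swap)
    also have "\<dots> = (\<Sum>b<m. (matrix_inv (h i) ** (\<Sum>a<m. transpose (D a i) ** D a b)) *v pDw w (f b) t x)"
      by (simp add: mv_sum_l[symmetric] mm_sum_r L_def matrix_mul_assoc)
    also have "\<dots> = (\<Sum>b<m. (if b = i then pDw w (f b) t x else 0))"
      using DtD i h_inv by (intro sum.cong) (auto simp: inv_left)
    also have "\<dots> = pDw w (f i) t x" using i by simp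
    finally show ?thesis by simp
  qed
  have transfer: "\<exists>B\<ge>0. \<forall>i<m. \<forall>t\<ge>1. \<forall>x. norm (pD p q (f i) t x) \<le> B * t powr (-2)"
    if H: "\<forall>a<m. \<exists>C. \<forall>t\<ge>1. \<forall>x. norm (pD p q (Z a) t x) \<le> C * t powr (-2)" for p q
  proof -
    have "\<forall>a. \<exists>C. a < m \<longrightarrow> (\<forall>t\<ge>1. \<forall>x. norm (pD p q (Z a) t x) \<le> C * t powr (-2))"
      using H by blast
    then obtain C where C: "\<And>a t x. a < m \<Longrightarrow> 1 \<le> t \<Longrightarrow> norm (pD p q (Z a) t x) \<le> C a * t powr (-2)"
      using choice[of "\<lambda>a C. a < m \<longrightarrow> (\<forall>t\<ge>1. \<forall>x. norm (pD p q (Z a) t x) \<le> C * t powr (-2))"] by blast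
    define B where "B = (\<Sum>i<m. \<Sum>a<m. onorm ((*v) (L i a)) * \<bar>C a\<bar>)"
    have onn: "\<And>A::real^'k^'k. 0 \<le> onorm ((*v) A)" using onorm_pos_le[OF bl_mv] by blast
    have B0: "0 \<le> B" unfolding B_def using onn by (intro sum_nonneg mult_nonneg_nonneg) auto
    have "norm (pD p q (f i) t x) \<le> B * t powr (-2)" if i: "i < m" and t: "1 \<le> t" for i t x
    proof -
      have "norm (pD p q (f i) t x) = norm (\<Sum>a<m. L i a *v pD p q (Z a) t x)"
        using finv[OF i, of t] t by (simp add: pD_pDw)
      also have "\<dots> \<le> (\<Sum>a<m. norm (L i a *v pD p q (Z a) t x))" by (rule norm_sum)
      also have "\<dots> \<le> (\<Sum>a<m. onorm ((*v) (L i a)) * (\<bar>C a\<bar> * t powr (-2)))"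
      proof (rule sum_mono)
        fix a assume a: "a \<in> {..<m}"
        have "norm (pD p q (Z a) t x) \<le> \<bar>C a\<bar> * t powr (-2)"
          using C[of a t x] a t by (meson abs_ge_self lessThan_iff mult_right_mono order.trans powr_ge_zero)
        then show "norm (L i a *v pD p q (Z a) t x) \<le> onorm ((*v) (L i a)) * (\<bar>C a\<bar> * t powr (-2))"
          using norm_mv[of "L i a"] onn by (meson mult_left_mono order.trans)
      qed
      also have "\<dots> = (\<Sum>a<m. onorm ((*v) (L i a)) * \<bar>C a\<bar>) * t powr (-2)"
        by (simp add: sum_distrib_right mult.assoc)
      also have "\<dots> \<le> B * t powr (-2)"
      proof (rule mult_right_mono)
        show "(\<Sum>a<m. onorm ((*v) (L i a)) * \<bar>C a\<bar>) \<le> B"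
          unfolding B_def using i onn
          by (intro member_le_sum[where f="\<lambda>i. \<Sum>a<m. onorm ((*v) (L i a)) * \<bar>C a\<bar>"]) 
             (auto intro!: sum_nonneg mult_nonneg_nonneg)
      qed simp
      finally show ?thesis .
    qed
    then show ?thesis using B0 by blast
  qed
  have Z0: "Z 0 = (\<lambda>s y. \<Sum>b<m. f b s y)"
    using D_first_row by (auto simp: Z_def intro!: ext sum.cong)
  have "\<forall>a<m. \<exists>C. \<forall>t\<ge>1. \<forall>x. norm (pD 2 0 (Z a) t x) \<le> C * t powr (-2)"
  proof (intro allI impI)
    fix a assume a: "a < m"
    show "\<exists>C. \<forall>t\<ge>1. \<forall>x. norm (pD 2 0 (Z a) t x) \<le> C * t powr (-2)"
    proof (cases "a = 0")
      case True then show ?thesis using decay_u_tt Z0 by simp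
    next
      case False then show ?thesis using decay_Zt_tt a by (simp add: Z_def)
    qed
  qed
  from transfer[OF this] obtain B1 where B1: "0 \<le> B1"
    "\<And>i t x. i < m \<Longrightarrow> 1 \<le> t \<Longrightarrow> norm (pD 2 0 (f i) t x) \<le> B1 * t powr (-2)" by blast
  have "\<forall>a<m. \<exists>C. \<forall>t\<ge>1. \<forall>x. norm (pD 1 1 (Z a) t x) \<le> C * t powr (-2)"
  proof (intro allI impI)
    fix a assume a: "a < m"
    show "\<exists>C. \<forall>t\<ge>1. \<forall>x. norm (pD 1 1 (Z a) t x) \<le> C * t powr (-2)"
    proof (cases "a = 0")
      case True then show ?thesis using decay_u_tx Z0 by simp
    next
      case False
      then have "\<forall>\<beta>. \<exists>C. \<forall>t\<ge>1. \<forall>x. norm (pD 1 \<beta> (Z a) t x) \<le> C * t powr (-3/2 - real \<beta> / 2)"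
        using decay_Zt_t a unfolding Z_def by auto
      then have "\<exists>C. \<forall>t\<ge>1. \<forall>x. norm (pD 1 1 (Z a) t x) \<le> C * t powr (-3/2 - real (1::nat) / 2)" by blast
      moreover have "(-3/2 - real (1::nat) / 2) = (-2::real)" by simp
      ultimately show ?thesis by simp
    qed
  qed
  from transfer[OF this] obtain B2 where B2: "0 \<le> B2"
    "\<And>i t x. i < m \<Longrightarrow> 1 \<le> t \<Longrightarrow> norm (pD 1 1 (f i) t x) \<le> B2 * t powr (-2)" by blast
  have "\<forall>a<m. \<exists>C. \<forall>t\<ge>1. \<forall>x. norm (pD 0 3 (Z a) t x) \<le> C * t powr (-2)"
  proof (intro allI impI)
    fix a assume a: "a < m"
    have "\<exists>C. \<forall>t\<ge>1. \<forall>x. norm (pD 0 3 (Z a) t x) \<le> C * t powr (-1/2 - real (3::nat) / 2)"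
      using decay_Z a unfolding Z_def by blast
    moreover have "(-1/2 - real (3::nat) / 2) = (-2::real)" by simp
    ultimately show "\<exists>C. \<forall>t\<ge>1. \<forall>x. norm (pD 0 3 (Z a) t x) \<le> C * t powr (-2)" by simp
  qed
  from transfer[OF this] obtain B3 where B3: "0 \<le> B3"
    "\<And>i t x. i < m \<Longrightarrow> 1 \<le> t \<Longrightarrow> norm (pD 0 3 (f i) t x) \<le> B3 * t powr (-2)" by blast
  define B where "B = B1 + B2 + B3"
  have B0: "0 \<le> B" using B1 B2 B3 by (simp add: B_def)
  have pDs: "\<And>g. pD 2 0 g = pdt (pdt g)" "\<And>g. pD 1 1 g = pdt (pdx g)" "\<And>g. pD 0 3 g = pdx (pdx (pdx g))"
    by (simp_all add: pD_def numeral_eq_Suc)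
  have dec: "\<And>s t::real. 1 \<le> t \<Longrightarrow> t \<le> s \<Longrightarrow> s powr (-2) \<le> t powr (-2)"
    by (rule powr_mono2') auto
  have bt: "norm (pdt (pdt (f i)) s y) \<le> B * t powr (-2)" "norm (pdt (pdx (f i)) s y) \<le> B * t powr (-2)"
     "norm (pdx (pdx (pdx (f i))) s y) \<le> B * t powr (-2)"
    if "i < m" "1 \<le> t" "t \<le> s" for i t s y
  proof -
    have st: "s powr (-2) \<le> t powr (-2)" using dec that by blast
    have p0: "0 \<le> s powr (-2)" by simp
    have "B1 * s powr (-2) \<le> B * t powr (-2)" "B2 * s powr (-2) \<le> B * t powr (-2)" "B3 * s powr (-2) \<le> B * t powr (-2)"
      using B1(1) B2(1) B3(1) st p0 unfolding B_def
      by (intro mult_mono; simp)+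
    then show "norm (pdt (pdt (f i)) s y) \<le> B * t powr (-2)" "norm (pdt (pdx (f i)) s y) \<le> B * t powr (-2)"
     "norm (pdx (pdx (pdx (f i))) s y) \<le> B * t powr (-2)"
      using B1(2)[of i s y, unfolded pDs] B2(2)[of i s y, unfolded pDs] B3(2)[of i s y, unfolded pDs] that
      by linarith+
  qed
  have onn: "\<And>A::real^'k^'k. 0 \<le> onorm ((*v) A)" using onorm_pos_le[OF bl_mv] by blast
  define C where "C = (\<Sum>a<m. \<Sum>b<m. onorm ((*v) (D a b)) * B * (\<rho> + 1 + 2 * \<bar>lam b\<bar>))"
  show ?thesis
  proof (rule exI[of _ C], rule exI[of _ "1::real"], rule exI[of _ "1::real"], intro conjI allI impI)
    show "0 < (1::real)" by simp
    fix dx :: real and n :: nat and j :: int and a :: nat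
    assume dx: "0 < dx \<and> dx \<le> 1" and tn: "1 \<le> real n * (\<rho> * dx)" and a: "a < m"
    define t where "t = real n * (\<rho> * dx)"
    define x where "x = real_of_int j * dx"
    have t1: "1 \<le> t" and tpos: "0 < t" using tn by (auto simp: t_def)
    have dx0: "0 < dx" and dx1: "dx \<le> 1" using dx by auto
    have rdt: "0 < \<rho> * dx" using rho_pos dx0 by simp
    define P where "P = t powr (-2)"
    have P0: "0 \<le> P" by (simp add: P_def)
    have per: "norm (roe_trunc lam M m f dx (\<rho> * dx) b t x) \<le> (B * P) * (\<rho> * dx + dx + 2 * \<bar>lam b\<bar> * dx^2)"
      if b: "b < m" for b
    proof -
      have Q: "M b (\<Sum>l<m. f l t y) = pdt (f b) t y + lam b *\<^sub>R pdx (f b) t y + f b t y" for y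
      proof -
        have "pdt (f b) t y + lam b *\<^sub>R pdx (f b) t y = M b (\<Sum>l<m. f l t y) - f b t y"
          using bgk b tpos by blast
        then show ?thesis by (simp add: algebra_simps)
      qed
      show ?thesis
        unfolding roe_trunc_def Let_def
        by (rule roe_bound[where g="f b" and t=t and r=dx and dt="\<rho> * dx" and B="B * P"
              and Qm="M b (\<Sum>l<m. f l t (x - dx))" and Qz="M b (\<Sum>l<m. f l t x)"
              and Qp="M b (\<Sum>l<m. f l t (x + dx))" and lam="lam b" and x=x])
           (use smf[OF b] tpos dx0 rdt bt[OF b t1] Q in \<open>auto simp: P_def\<close>)
    qed
    have "norm (\<Sum>b<m. D a b *v roe_trunc lam M m f dx (\<rho> * dx) b t x)
        \<le> (\<Sum>b<m. norm (D a b *v roe_trunc lam M m f dx (\<rho> * dx) b t x))" by (rule norm_sum)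
    also have "\<dots> \<le> (\<Sum>b<m. onorm ((*v) (D a b)) * B * (\<rho> + 1 + 2 * \<bar>lam b\<bar>) * (dx * P))"
    proof (rule sum_mono)
      fix b assume b: "b \<in> {..<m}"
      have sq: "dx^2 \<le> dx" using dx0 dx1 by (simp add: power2_eq_square mult_le_cancel_right1)
      have "(B * P) * (\<rho> * dx + dx + 2 * \<bar>lam b\<bar> * dx^2) \<le> (B * P) * (\<rho> * dx + dx + 2 * \<bar>lam b\<bar> * dx)"
        using sq B0 P0 by (intro mult_left_mono) (auto intro: mult_left_mono)
      also have "\<dots> = B * (\<rho> + 1 + 2 * \<bar>lam b\<bar>) * (dx * P)" by (simp add: algebra_simps)
      finally have pb: "norm (roe_trunc lam M m f dx (\<rho> * dx) b t x) \<le> B * (\<rho> + 1 + 2 * \<bar>lam b\<bar>) * (dx * P)"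
        using per b by (meson lessThan_iff order.trans)
      have "norm (D a b *v roe_trunc lam M m f dx (\<rho> * dx) b t x)
          \<le> onorm ((*v) (D a b)) * norm (roe_trunc lam M m f dx (\<rho> * dx) b t x)" by (rule norm_mv)
      also have "\<dots> \<le> onorm ((*v) (D a b)) * (B * (\<rho> + 1 + 2 * \<bar>lam b\<bar>) * (dx * P))"
        using pb onn by (rule mult_left_mono)
      finally show "norm (D a b *v roe_trunc lam M m f dx (\<rho> * dx) b t x)
          \<le> onorm ((*v) (D a b)) * B * (\<rho> + 1 + 2 * \<bar>lam b\<bar>) * (dx * P)" by (simp add: mult.assoc)
    qed
    also have "\<dots> = (\<Sum>b<m. onorm ((*v) (D a b)) * B * (\<rho> + 1 + 2 * \<bar>lam b\<bar>)) * (dx * P)"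
      by (simp add: sum_distrib_right)
    also have "\<dots> \<le> C * (dx * P)"
    proof (rule mult_right_mono)
      show "(\<Sum>b<m. onorm ((*v) (D a b)) * B * (\<rho> + 1 + 2 * \<bar>lam b\<bar>)) \<le> C"
        unfolding C_def using a onn B0 rho_pos
        by (intro member_le_sum[where f="\<lambda>a. \<Sum>b<m. onorm ((*v) (D a b)) * B * (\<rho> + 1 + 2 * \<bar>lam b\<bar>)"])
           (auto intro!: sum_nonneg mult_nonneg_nonneg)
      show "0 \<le> dx * P" using dx0 P0 by simp
    qed
    also have "\<dots> \<le> C * (dx * P + dx\<^sup>2 * t powr (-3/2))"
    proof (rule mult_left_mono)
      show "0 \<le> C" unfolding C_def using onn B0 rho_pos by (auto intro!: sum_nonneg mult_nonneg_nonneg)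
    qed simp
    finally show "norm (\<Sum>b<m. D a b *v roe_trunc lam M m f dx (\<rho> * dx) b (real n * (\<rho> * dx)) (real_of_int j * dx))
         \<le> C * (dx * (real n * (\<rho> * dx)) powr (-2) + dx\<^sup>2 * (real n * (\<rho> * dx)) powr (-3/2))"
      by (simp add: t_def x_def P_def)
  qed
qed

end
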